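(* Let $n\ge 2$. Among all pairs $T_1,T_2$ of rooted trees on leaf set $[n]$, the pairs for which the cone $K_{T_1}+K_{T_2}$ has maximal dimension are exactly those for which $T_1$ and $T_2$ are both binary and have no nontrivial common clade, i.e. $\mathrm{clade}(T_1)\cap\mathrm{clade}(T_2)=\{[n]\}$.
   Context: A rooted tree on leaf set $[n]$ has leaves labeled bijectively by $[n]$ and internal vertices each with at least two children; it is binary if every internal vertex has exactly two children. A clade of $T$ is the set of leaves below an internal vertex; $\mathrm{clade}(T)$ is the set of clades, and $[n]$ is the trivial clade. An ultrametric is $\delta\in\mathbb{R}^{\binom{[n]}{2}}$ with $\delta_{uv}\le\max\{\delta_{uw},\delta_{vw}\}$ for all distinct $u,v,w$. $K_T$ is the set of $\delta$ such that there are real weights on the internal vertices of $T$, weakly increasing along every path toward the root, with $\delta_{uv}$ equal to the weight of the most recent common ancestor of $u$ and $v$; $K_{T_1}+K_{T_2}$ is the Minkowski sum. *)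

theory Defs
  imports "HOL-Analysis.Analysis" "HOL-Library.Function_Algebras"
begin

text \<open>A rooted tree on leaf set [n] = {1..n} (internal vertices with at least two
children, up to isomorphism fixing leaf labels) is represented by its set of clades,
i.e. the leaf sets below its internal vertices. These are exactly the families H of
subsets of [n] containing [n], all of cardinality at least 2, pairwise nested or disjoint.\<close>

definition is_tree :: "nat \<Rightarrow> nat set set \<Rightarrow> bool" where
  "is_tree n H \<longleftrightarrow> {1..n} \<in> H \<and> (\<forall>C\<in>H. C \<subseteq> {1..n} \<and> 2 \<le> card C) \<and>
     (\<forall>C\<in>H. \<forall>D\<in>H. C \<subseteq> D \<or> D \<subseteq> C \<or> C \<inter> D = {})"

definition tree_vertices :: "nat \<Rightarrow> nat set set \<Rightarrow> nat set set" where
  "tree_vertices n H = H \<union> {{i} | i. i \<in> {1..n}}"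

definition children :: "nat \<Rightarrow> nat set set \<Rightarrow> nat set \<Rightarrow> nat set set" where
  "children n H C = {D \<in> tree_vertices n H. D \<subset> C \<and>
      \<not> (\<exists>E \<in> tree_vertices n H. D \<subset> E \<and> E \<subset> C)}"

definition is_binary :: "nat \<Rightarrow> nat set set \<Rightarrow> bool" where
  "is_binary n H \<longleftrightarrow> (\<forall>C\<in>H. card (children n H C) = 2)"

text \<open>Coordinates of R^(binom [n] 2): pairs (u,v) with 1 \<le> u < v \<le> n.\<close>
definition pairs :: "nat \<Rightarrow> (nat \<times> nat) set" where
  "pairs n = {(u, v). 1 \<le> u \<and> u < v \<and> v \<le> n}"

definition mrca :: "nat set set \<Rightarrow> nat \<Rightarrow> nat \<Rightarrow> nat set" where
  "mrca H u v = \<Inter> {C \<in> H. u \<in> C \<and> v \<in> C}"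

definition K :: "nat \<Rightarrow> nat set set \<Rightarrow> ((nat \<times> nat) \<Rightarrow> real) set" where
  "K n H = {\<delta>. (\<forall>p. p \<notin> pairs n \<longrightarrow> \<delta> p = 0) \<and>
     (\<exists>w :: nat set \<Rightarrow> real. (\<forall>C\<in>H. \<forall>D\<in>H. C \<subseteq> D \<longrightarrow> w C \<le> w D) \<and>
        (\<forall>(u, v) \<in> pairs n. \<delta> (u, v) = w (mrca H u v)))}"

definition minkowski_sum :: "('a \<Rightarrow> real) set \<Rightarrow> ('a \<Rightarrow> real) set \<Rightarrow> ('a \<Rightarrow> real) set" where
  "minkowski_sum A B = {(\<lambda>p. x p + y p) | x y. x \<in> A \<and> y \<in> B}"

definition cone_dim :: "('a \<Rightarrow> real) set \<Rightarrow> nat" where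
  "cone_dim S = vector_space.dim (\<lambda>(r::real) f p. r * f p) S"

definition max_pair_dim :: "nat \<Rightarrow> nat" where
  "max_pair_dim n = Max {cone_dim (minkowski_sum (K n H1) (K n H2)) | H1 H2.
                          is_tree n H1 \<and> is_tree n H2}"

end

theory Submission
  imports Defs
begin

lemma tree_finite: "is_tree n T \<Longrightarrow> finite T"
proof -
  assume "is_tree n T"
  then have "T \<subseteq> Pow {1..n}" unfolding is_tree_def by auto
  then show "finite T" using finite_subset by blast
qed

lemma tree_sub: "is_tree n T \<Longrightarrow> C \<in> T \<Longrightarrow> C \<subseteq> {1..n}"
  unfolding is_tree_def by blast

lemma tree_card: "is_tree n T \<Longrightarrow> C \<in> T \<Longrightarrow> 2 \<le> card C"
  unfolding is_tree_def by blast

lemma tree_root: "is_tree n T \<Longrightarrow> {1..n} \<in> T"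
  unfolding is_tree_def by blast

lemma tree_lam: "is_tree n T \<Longrightarrow> C \<in> T \<Longrightarrow> D \<in> T \<Longrightarrow> C \<subseteq> D \<or> D \<subseteq> C \<or> C \<inter> D = {}"
  unfolding is_tree_def by blast

lemma tree_nested: "is_tree n T \<Longrightarrow> C \<in> T \<Longrightarrow> D \<in> T \<Longrightarrow> x \<in> C \<Longrightarrow> x \<in> D \<Longrightarrow> C \<subseteq> D \<or> D \<subseteq> C"
  using tree_lam[of n T C D] by blast

lemma tree_cfinite: "is_tree n T \<Longrightarrow> C \<in> T \<Longrightarrow> finite C"
  using tree_sub[of n T C] by (simp add: finite_subset)

lemma my_ex_max:
  fixes f :: "'a \<Rightarrow> nat"
  assumes "finite S" "S \<noteq> {}"
  shows "\<exists>x\<in>S. \<forall>y\<in>S. f y \<le> f x"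
proof -
  have "Max (f ` S) \<in> f ` S" using assms by simp
  then obtain x where x: "x \<in> S" "f x = Max (f ` S)" by auto
  have "\<forall>y\<in>S. f y \<le> f x" using x(2) assms(1) by (simp add: Max_ge)
  then show ?thesis using x(1) by blast
qed

lemma chain_inter:
  assumes "finite F" "F \<noteq> {}" "\<forall>A\<in>F. \<forall>B\<in>F. A \<subseteq> B \<or> B \<subseteq> A"
  shows "\<Inter>F \<in> F"
  using assms
proof (induction F rule: finite_ne_induct)
  case (singleton x)
  then show ?case by simp
next
  case (insert x F)
  then have "\<Inter>F \<in> F" by blast
  moreover have "x \<subseteq> \<Inter>F \<or> \<Inter>F \<subseteq> x" using insert.prems calculation by blast
  then show ?case
  proof
    assume "x \<subseteq> \<Inter>F"
    then have "\<Inter>(insert x F) = x" by auto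
    then show ?thesis by simp
  next
    assume "\<Inter>F \<subseteq> x"
    then have "\<Inter>(insert x F) = \<Inter>F" by auto
    then show ?thesis using \<open>\<Inter>F \<in> F\<close> by simp
  qed
qed

lemma mrca_in:
  assumes "is_tree n T" "u \<in> {1..n}" "v \<in> {1..n}"
  shows "mrca T u v \<in> T"
proof -
  let ?F = "{C\<in>T. u\<in>C \<and> v\<in>C}"
  have "finite ?F" using tree_finite[OF assms(1)] by simp
  moreover have "?F \<noteq> {}" using tree_root[OF assms(1)] assms by blast
  moreover have "\<forall>A\<in>?F. \<forall>B\<in>?F. A \<subseteq> B \<or> B \<subseteq> A" using tree_nested[OF assms(1)] by blast
  ultimately have "\<Inter>?F \<in> ?F" by (rule chain_inter)
  then show ?thesis unfolding mrca_def by simp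
qed

lemma mrca_mem: "u \<in> mrca T u v" "v \<in> mrca T u v"
  unfolding mrca_def by auto

lemma mrca_le: "C \<in> T \<Longrightarrow> u \<in> C \<Longrightarrow> v \<in> C \<Longrightarrow> mrca T u v \<subseteq> C"
  unfolding mrca_def by auto

lemma mrca_sym: "mrca T u v = mrca T v u"
  unfolding mrca_def by (simp add: conj_commute)


lemma clade_is_mrca:
  assumes T: "is_tree n T" and C: "C \<in> T"
  shows "\<exists>u v. (u, v) \<in> pairs n \<and> mrca T u v = C"
proof -
  have fC: "finite C" using tree_cfinite[OF T C] .
  have cC: "2 \<le> card C" using tree_card[OF T C] .
  have Cs: "C \<subseteq> {1..n}" using tree_sub[OF T C] .
  obtain u where u: "u \<in> C" using cC by fastforce
  let ?F = "{D\<in>T. u \<in> D \<and> D \<subset> C}"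
  have "\<exists>v\<in>C. v \<noteq> u \<and> mrca T u v = C"
  proof (cases "?F = {}")
    case True
    have "card (C - {u}) \<ge> 1" using cC u fC by (simp add: card_Diff_singleton)
    then obtain v where "v \<in> C - {u}" by (metis card.empty ex_in_conv not_one_le_zero)
    then have v: "v \<in> C" "v \<noteq> u" by auto
    have m: "mrca T u v \<in> T" using mrca_in[OF T] u v Cs by blast
    have "mrca T u v \<subseteq> C" using mrca_le[OF C u v(1)] .
    have "mrca T u v \<notin> ?F" using True by simp
    then have "mrca T u v = C" using m mrca_mem(1)[of u T v] \<open>mrca T u v \<subseteq> C\<close> by blast
    then show ?thesis using v by blast
  next
    case False
    have "finite ?F" using tree_finite[OF T] by simp
    then obtain M where M: "M \<in> ?F" "\<forall>D\<in>?F. card D \<le> card M"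
      using False my_ex_max[of ?F card] by blast
    obtain v where v: "v \<in> C" "v \<notin> M" using M(1) by blast
    have m: "mrca T u v \<in> T" using mrca_in[OF T] u v Cs by blast
    have le: "mrca T u v \<subseteq> C" using mrca_le[OF C u v(1)] .
    have "mrca T u v = C"
    proof (rule ccontr)
      assume ne: "mrca T u v \<noteq> C"
      then have inF: "mrca T u v \<in> ?F" using m le mrca_mem by blast
      have "mrca T u v \<subseteq> M \<or> M \<subseteq> mrca T u v"
        using tree_nested[OF T m] M(1) mrca_mem by blast
      moreover have "finite (mrca T u v)" using tree_cfinite[OF T m] .
      moreover have "card (mrca T u v) \<le> card M" using M(2) inF by blast
      ultimately have "mrca T u v \<subseteq> M"
        using card_seteq[of "mrca T u v" M] by blast
      then show False using v mrca_mem by blast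
    qed
    moreover have "u \<in> M" using M(1) by simp
    ultimately show ?thesis using v by (intro bexI[of _ v]) auto
  qed
  then obtain v where v: "v \<in> C" "v \<noteq> u" "mrca T u v = C" by blast
  show ?thesis
  proof (cases "u < v")
    case True
    have "(u, v) \<in> pairs n" using True u v(1) Cs unfolding pairs_def by auto
    then show ?thesis using v(3) by blast
  next
    case False
    then have "v < u" using v(2) by simp
    have "(v, u) \<in> pairs n" using \<open>v < u\<close> u v(1) Cs unfolding pairs_def by auto
    moreover have "mrca T v u = C" using v(3) mrca_sym[of T u v] by simp
    ultimately show ?thesis by blast
  qed
qed

lemma vert_cases: "D \<in> tree_vertices n T \<Longrightarrow> D \<in> T \<or> (\<exists>i\<in>{1..n}. D = {i})"
  unfolding tree_vertices_def by blast

lemma vert_sub: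
  assumes T: "is_tree n T" and D: "D \<in> tree_vertices n T"
  shows "D \<subseteq> {1..n} \<and> D \<noteq> {}"
proof (cases "D \<in> T")
  case True
  then show ?thesis using tree_sub[OF T] tree_card[OF T, of D] by auto
next
  case False
  then obtain i where "i \<in> {1..n}" "D = {i}" using vert_cases[OF D] by blast
  then show ?thesis by auto
qed

lemma singletons_card: "card {{i} | i. i \<in> {1..n::nat}} = n"
proof -
  have "{{i} | i. i \<in> {1..n::nat}} = (\<lambda>i. {i}) ` {1..n}" by auto
  moreover have "inj_on (\<lambda>i::nat. {i}) {1..n}" by (auto simp: inj_on_def)
  ultimately show ?thesis by (simp add: card_image)
qed

lemma vert_finite: "is_tree n T \<Longrightarrow> finite (tree_vertices n T)"
  unfolding tree_vertices_def using tree_finite by auto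

lemma vert_card:
  assumes T: "is_tree n T"
  shows "card (tree_vertices n T) = card T + n"
proof -
  have d: "T \<inter> {{i} | i. i \<in> {1..n}} = {}"
  proof (rule ccontr)
    assume "T \<inter> {{i} | i. i \<in> {1..n}} \<noteq> {}"
    then obtain i where "{i} \<in> T" by blast
    then have "2 \<le> card {i}" using tree_card[OF T] by blast
    then show False by simp
  qed
  have f2: "finite {{i} | i. i \<in> {1..n::nat}}" by simp
  have "card (tree_vertices n T) = card T + card {{i} | i. i \<in> {1..n}}"
    unfolding tree_vertices_def using card_Un_disjoint[OF tree_finite[OF T] f2 d] .
  then show ?thesis using singletons_card by simp
qed

lemma children_sub: "children n T C \<subseteq> tree_vertices n T"
  unfolding children_def by blast

lemma children_disj:
  assumes T: "is_tree n T" and C: "C \<in> T" and C': "C' \<in> T" and ne: "C \<noteq> C'"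
    and D: "D \<in> children n T C" and D': "D \<in> children n T C'"
  shows False
proof -
  have Dv: "D \<in> tree_vertices n T" and DC: "D \<subset> C" and DC': "D \<subset> C'"
    using D D' unfolding children_def by auto
  obtain x where x: "x \<in> D" using vert_sub[OF T Dv] by blast
  have "C \<subseteq> C' \<or> C' \<subseteq> C" using tree_nested[OF T C C', of x] x DC DC' by blast
  then have "C \<subset> C' \<or> C' \<subset> C" using ne by blast
  moreover have "C \<in> tree_vertices n T" "C' \<in> tree_vertices n T"
    using C C' unfolding tree_vertices_def by auto
  ultimately show False using D D' DC DC' unfolding children_def by blast
qed

lemma children_union:
  assumes T: "is_tree n T"
  shows "(\<Union>C\<in>T. children n T C) = tree_vertices n T - {{1..n}}"
proof
  show "(\<Union>C\<in>T. children n T C) \<subseteq> tree_vertices n T - {{1..n}}"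
  proof
    fix D assume "D \<in> (\<Union>C\<in>T. children n T C)"
    then obtain C where C: "C \<in> T" and D: "D \<in> children n T C" by blast
    have "D \<subset> C" "D \<in> tree_vertices n T" using D unfolding children_def by auto
    moreover have "C \<subseteq> {1..n}" using tree_sub[OF T C] .
    ultimately show "D \<in> tree_vertices n T - {{1..n}}" by blast
  qed
next
  show "tree_vertices n T - {{1..n}} \<subseteq> (\<Union>C\<in>T. children n T C)"
  proof
    fix D assume D0: "D \<in> tree_vertices n T - {{1..n}}"
    then have Dv: "D \<in> tree_vertices n T" and Dn: "D \<noteq> {1..n}" by auto
    have Ds: "D \<subseteq> {1..n}" and Dne: "D \<noteq> {}" using vert_sub[OF T Dv] by auto
    let ?F = "{E\<in>T. D \<subset> E}"
    have "{1..n} \<in> ?F" using tree_root[OF T] Ds Dn by blast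
    then have Fne: "?F \<noteq> {}" by blast
    have Ff: "finite ?F" using tree_finite[OF T] by simp
    obtain x where x: "x \<in> D" using Dne by blast
    have chain: "\<forall>A\<in>?F. \<forall>B\<in>?F. A \<subseteq> B \<or> B \<subseteq> A"
    proof (intro ballI)
      fix A B assume "A \<in> ?F" "B \<in> ?F"
      then have "A \<in> T" "B \<in> T" "x \<in> A" "x \<in> B" using x by auto
      then show "A \<subseteq> B \<or> B \<subseteq> A" using tree_nested[OF T] by blast
    qed
    have CF: "\<Inter>?F \<in> ?F" using chain_inter[OF Ff Fne chain] .
    define C where "C = \<Inter>?F"
    have C: "C \<in> T" "D \<subset> C" using CF unfolding C_def by auto
    have "D \<in> children n T C"
      unfolding children_def
    proof (intro CollectI conjI notI)
      show "D \<in> tree_vertices n T" using Dv .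
      show "D \<subset> C" using C(2) .
    next
      assume "\<exists>E\<in>tree_vertices n T. D \<subset> E \<and> E \<subset> C"
      then obtain E where E: "E \<in> tree_vertices n T" "D \<subset> E" "E \<subset> C" by blast
      from vert_cases[OF E(1)] show False
      proof
        assume "E \<in> T"
        then have "E \<in> ?F" using E(2) by blast
        then have "C \<subseteq> E" unfolding C_def by blast
        then show False using E(3) by blast
      next
        assume "\<exists>i\<in>{1..n}. E = {i}"
        then obtain i where "E = {i}" by blast
        then show False using E(2) Dne by blast
      qed
    qed
    then show "D \<in> (\<Union>C\<in>T. children n T C)" using C(1) by blast
  qed
qed

lemma children_ge2:
  assumes T: "is_tree n T" and C: "C \<in> T"
  shows "2 \<le> card (children n T C)"
proof -
  have fin: "finite (children n T C)"
    using finite_subset[OF children_sub vert_finite[OF T]] by blast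
  have cC: "2 \<le> card C" using tree_card[OF T C] .
  have fC: "finite C" using tree_cfinite[OF T C] .
  have cover: "C \<subseteq> \<Union>(children n T C)"
  proof
    fix i assume i: "i \<in> C"
    have iv: "{i} \<in> tree_vertices n T" using i tree_sub[OF T C] unfolding tree_vertices_def by blast
    have "{i} \<noteq> C"
    proof
      assume "{i} = C"
      then have "card C = 1" by auto
      then show False using cC by simp
    qed
    then have iC: "{i} \<subset> C" using i by blast
    let ?F = "{E \<in> tree_vertices n T. {i} \<subseteq> E \<and> E \<subset> C}"
    have Ff: "finite ?F" using vert_finite[OF T] by simp
    have Fne: "?F \<noteq> {}" using iv iC by blast
    obtain M where M: "M \<in> ?F" "\<forall>E\<in>?F. card E \<le> card M" using my_ex_max[OF Ff Fne, of card] by blast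
    have "M \<in> children n T C"
      unfolding children_def
    proof (intro CollectI conjI notI)
      show "M \<in> tree_vertices n T" "M \<subset> C" using M(1) by auto
    next
      assume "\<exists>E\<in>tree_vertices n T. M \<subset> E \<and> E \<subset> C"
      then obtain E where E: "E \<in> tree_vertices n T" "M \<subset> E" "E \<subset> C" by blast
      have "E \<in> ?F" using E M(1) by blast
      then have "card E \<le> card M" using M(2) by blast
      moreover have "finite E" using finite_subset[OF _ fC] E(3) by blast
      ultimately show False using psubset_card_mono[OF \<open>finite E\<close> E(2)] by simp
    qed
    then show "i \<in> \<Union>(children n T C)" using M(1) by blast
  qed
  show ?thesis
  proof (rule ccontr)
    assume "\<not> 2 \<le> card (children n T C)"
    then have "card (children n T C) = 0 \<or> card (children n T C) = 1" by linarith
    then show False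
    proof
      assume "card (children n T C) = 0"
      then have "children n T C = {}" using fin by simp
      then have "C = {}" using cover by auto
      then show False using cC by simp
    next
      assume "card (children n T C) = 1"
      then obtain D where "children n T C = {D}" using card_1_singletonE by blast
      moreover then have "D \<subset> C" unfolding children_def by blast
      ultimately show False using cover by auto
    qed
  qed
qed

lemma children_sum:
  assumes T: "is_tree n T" and n: "1 \<le> n"
  shows "(\<Sum>C\<in>T. card (children n T C)) = card T + n - 1"
proof -
  have fin: "\<forall>C\<in>T. finite (children n T C)"
    using finite_subset[OF children_sub vert_finite[OF T]] by blast
  have disj: "\<forall>C\<in>T. \<forall>C'\<in>T. C \<noteq> C' \<longrightarrow> children n T C \<inter> children n T C' = {}"
    using children_disj[OF T] by blast
  have "card (\<Union>C\<in>T. children n T C) = (\<Sum>C\<in>T. card (children n T C))"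
    using card_UN_disjoint[OF tree_finite[OF T] fin disj] .
  moreover have "card (\<Union>C\<in>T. children n T C) = card (tree_vertices n T) - 1"
  proof -
    have "{1..n} \<in> tree_vertices n T" using tree_root[OF T] unfolding tree_vertices_def by blast
    then show ?thesis using children_union[OF T] vert_finite[OF T] by simp
  qed
  ultimately show ?thesis using vert_card[OF T] by simp
qed

lemma tree_card_bound:
  assumes T: "is_tree n T" and n: "1 \<le> n"
  shows "card T \<le> n - 1" and "is_binary n T \<longleftrightarrow> card T = n - 1"
proof -
  have s: "(\<Sum>C\<in>T. card (children n T C)) = card T + n - 1" using children_sum[OF T n] .
  have "(\<Sum>C\<in>T. 2) \<le> (\<Sum>C\<in>T. card (children n T C))"
    using children_ge2[OF T] by (intro sum_mono) auto
  then have le: "2 * card T \<le> card T + n - 1" using s by simp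
  then show "card T \<le> n - 1" by simp
  show "is_binary n T \<longleftrightarrow> card T = n - 1"
  proof
    assume "is_binary n T"
    then have "(\<Sum>C\<in>T. card (children n T C)) = (\<Sum>C\<in>T. 2)" unfolding is_binary_def by simp
    then show "card T = n - 1" using s by simp
  next
    assume c: "card T = n - 1"
    have eq: "(\<Sum>C\<in>T. card (children n T C)) = (\<Sum>C\<in>T. 2)" using s c n by simp
    show "is_binary n T"
      unfolding is_binary_def
    proof
      fix C assume C: "C \<in> T"
      have "\<forall>C\<in>T. 2 \<le> card (children n T C)" using children_ge2[OF T] by blast
      then show "card (children n T C) = 2"
        using sum_mono_inv[OF eq[symmetric], of C] tree_finite[OF T] C by simp
    qed
  qed
qed

lemma chain_union:
  assumes "finite F" "F \<noteq> {}" "\<forall>A\<in>F. \<forall>B\<in>F. A \<subseteq> B \<or> B \<subseteq> A"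
  shows "\<Union>F \<in> F"
  using assms
proof (induction F rule: finite_ne_induct)
  case (singleton x)
  then show ?case by simp
next
  case (insert x F)
  then have "\<Union>F \<in> F" by blast
  moreover have "x \<subseteq> \<Union>F \<or> \<Union>F \<subseteq> x" using insert.prems calculation by blast
  then show ?case
  proof
    assume "x \<subseteq> \<Union>F"
    then have "\<Union>(insert x F) = \<Union>F" by auto
    then show ?thesis using \<open>\<Union>F \<in> F\<close> by simp
  next
    assume "\<Union>F \<subseteq> x"
    then have "\<Union>(insert x F) = x" by auto
    then show ?thesis by simp
  qed
qed

lemma mrca_pair_in:
  assumes T: "is_tree n T" and u: "u \<in> C" and v: "v \<in> C" and C: "C \<in> T"
  shows "mrca T u v \<in> T" "mrca T u v \<subseteq> C"
proof -
  show "mrca T u v \<in> T" using mrca_in[OF T] tree_sub[OF T C] u v by blast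
  show "mrca T u v \<subseteq> C" using mrca_le[OF C u v] .
qed

lemma sep_witness:
  assumes T: "is_tree n T" and C: "C \<in> T" and u: "u \<in> C" and v: "v \<in> C"
    and ne: "mrca T u v \<noteq> C"
  shows "\<exists>w\<in>C. w \<noteq> u \<and> w \<noteq> v \<and> mrca T u w = C \<and> mrca T v w = C"
proof -
  have m: "mrca T u v \<in> T" "mrca T u v \<subseteq> C" using mrca_pair_in[OF T u v C] by auto
  let ?F = "{E\<in>T. u \<in> E \<and> E \<subset> C}"
  have mF: "mrca T u v \<in> ?F" using m ne mrca_mem by blast
  have Ff: "finite ?F" using tree_finite[OF T] by simp
  have ch: "\<forall>A\<in>?F. \<forall>B\<in>?F. A \<subseteq> B \<or> B \<subseteq> A"
  proof (intro ballI)
    fix A B assume "A \<in> ?F" "B \<in> ?F"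
    then show "A \<subseteq> B \<or> B \<subseteq> A" using tree_nested[OF T, of A B u] by blast
  qed
  have MF: "\<Union>?F \<in> ?F" using chain_union[OF Ff _ ch] mF by blast
  define M where "M = \<Union>?F"
  have M: "M \<in> T" "u \<in> M" "M \<subset> C" using MF unfolding M_def by auto
  have Mmax: "\<And>E. E \<in> ?F \<Longrightarrow> E \<subseteq> M" unfolding M_def by blast
  have vM: "v \<in> M" using Mmax[OF mF] mrca_mem(2)[of v T u] by blast
  obtain w where w: "w \<in> C" "w \<notin> M" using M(3) by blast
  have wu: "w \<noteq> u" "w \<noteq> v" using w(2) M(2) vM by auto
  have m1: "mrca T u w \<in> T" "mrca T u w \<subseteq> C" using mrca_pair_in[OF T u w(1) C] by auto
  have e1: "mrca T u w = C"
  proof (rule ccontr)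
    assume "mrca T u w \<noteq> C"
    then have "mrca T u w \<in> ?F" using m1 mrca_mem by blast
    then have "mrca T u w \<subseteq> M" using Mmax by blast
    then show False using w(2) mrca_mem(2)[of w T u] by blast
  qed
  have m2: "mrca T v w \<in> T" "mrca T v w \<subseteq> C" using mrca_pair_in[OF T v w(1) C] by auto
  have e2: "mrca T v w = C"
  proof (rule ccontr)
    assume ne2: "mrca T v w \<noteq> C"
    have "mrca T v w \<subseteq> M \<or> M \<subseteq> mrca T v w"
      using tree_nested[OF T m2(1) M(1), of v] vM mrca_mem(1)[of v T w] by blast
    then show False
    proof
      assume "mrca T v w \<subseteq> M"
      then show False using w(2) mrca_mem(2)[of w T v] by blast
    next
      assume "M \<subseteq> mrca T v w"
      then have "u \<in> mrca T v w" using M(2) by blast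
      then have "mrca T v w \<in> ?F" using m2 ne2 by blast
      then have "mrca T v w \<subseteq> M" using Mmax by blast
      then show False using w(2) mrca_mem(2)[of w T v] by blast
    qed
  qed
  show ?thesis using w(1) wu e1 e2 by blast
qed

lemma pair_hyp:
  assumes hyp: "\<forall>(u, v) \<in> pairs n. G1 (mrca T1 u v) = G2 (mrca T2 u v)"
    and u: "u \<in> {1..n}" and v: "v \<in> {1..n}" and uv: "u \<noteq> v"
  shows "G1 (mrca T1 u v) = G2 (mrca T2 u v)"
proof (cases "u < v")
  case True
  then have "(u, v) \<in> pairs n" using u v unfolding pairs_def by auto
  then show ?thesis using hyp by blast
next
  case False
  then have "v < u" using uv by simp
  then have "(v, u) \<in> pairs n" using u v unfolding pairs_def by auto
  then have "G1 (mrca T1 v u) = G2 (mrca T2 v u)" using hyp by blast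
  then show ?thesis by (simp add: mrca_sym)
qed

lemma trans2:
  assumes T: "is_tree n T" and D: "D \<in> T"
    and u: "u \<in> D" and v: "v \<in> D" and w: "w \<in> D"
    and h1: "mrca T u v \<noteq> D" and h2: "mrca T v w \<noteq> D"
  shows "mrca T u w \<noteq> D"
proof -
  have a: "mrca T u v \<in> T" "mrca T u v \<subseteq> D" using mrca_pair_in[OF T u v D] by auto
  have b: "mrca T v w \<in> T" "mrca T v w \<subseteq> D" using mrca_pair_in[OF T v w D] by auto
  have "mrca T u v \<subseteq> mrca T v w \<or> mrca T v w \<subseteq> mrca T u v"
    using tree_nested[OF T a(1) b(1), of v] mrca_mem by blast
  then show ?thesis
  proof
    assume "mrca T u v \<subseteq> mrca T v w"
    then have "u \<in> mrca T v w" using mrca_mem by blast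
    then have "mrca T u w \<subseteq> mrca T v w" using mrca_le[OF b(1)] mrca_mem by blast
    then show ?thesis using b(2) h2 by blast
  next
    assume "mrca T v w \<subseteq> mrca T u v"
    then have "w \<in> mrca T u v" using mrca_mem by blast
    then have "mrca T u w \<subseteq> mrca T u v" using mrca_le[OF a(1)] mrca_mem by blast
    then show ?thesis using a(2) h1 by blast
  qed
qed

lemma step_lemma:
  assumes T1: "is_tree n T1" and T2: "is_tree n T2"
    and hyp: "\<forall>(u, v) \<in> pairs n. G1 (mrca T1 u v) = G2 (mrca T2 u v)"
    and C: "C \<in> T1" and CT2: "C \<notin> T2"
  shows "\<exists>C'\<in>T1. C \<subset> C' \<and> G1 C = G1 C'"
proof -
  have Cs: "C \<subseteq> {1..n}" using tree_sub[OF T1 C] .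
  have cC: "2 \<le> card C" using tree_card[OF T1 C] .
  have fC: "finite C" using tree_cfinite[OF T1 C] .
  have Cne: "C \<noteq> {}" using cC by auto
  let ?F = "{E\<in>T2. C \<subseteq> E}"
  have Ff: "finite ?F" using tree_finite[OF T2] by simp
  have Fne: "?F \<noteq> {}" using tree_root[OF T2] Cs by blast
  obtain x0 where x0: "x0 \<in> C" using Cne by blast
  have ch: "\<forall>A\<in>?F. \<forall>B\<in>?F. A \<subseteq> B \<or> B \<subseteq> A"
  proof (intro ballI)
    fix A B assume "A \<in> ?F" "B \<in> ?F"
    then show "A \<subseteq> B \<or> B \<subseteq> A" using tree_nested[OF T2, of A B x0] x0 by blast
  qed
  define D where "D = \<Inter>?F"
  have DF: "D \<in> ?F" using chain_inter[OF Ff Fne ch] unfolding D_def .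
  have D: "D \<in> T2" "C \<subseteq> D" using DF by auto
  have Dmin: "\<And>E. E \<in> T2 \<Longrightarrow> C \<subseteq> E \<Longrightarrow> D \<subseteq> E" unfolding D_def by blast
  have CD: "C \<noteq> D" using CT2 D(1) by blast
  then obtain z where z: "z \<in> D" "z \<notin> C" using D(2) by blast
  have Ds: "D \<subseteq> {1..n}" using tree_sub[OF T2 D(1)] .
  have claim: "\<exists>u\<in>C. \<exists>v\<in>C. u \<noteq> v \<and> mrca T1 u v = C \<and> mrca T2 u v = D"
  proof (rule ccontr)
    assume neg0: "\<not> ?thesis"
    have neg: "\<And>u v. u \<in> C \<Longrightarrow> v \<in> C \<Longrightarrow> u \<noteq> v \<Longrightarrow> mrca T1 u v = C \<Longrightarrow> mrca T2 u v \<noteq> D"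
      using neg0 by blast
    have all: "\<forall>u\<in>C. \<forall>v\<in>C. u \<noteq> v \<longrightarrow> mrca T2 u v \<noteq> D"
    proof (intro ballI impI)
      fix u v assume u: "u \<in> C" and v: "v \<in> C" and uv: "u \<noteq> v"
      show "mrca T2 u v \<noteq> D"
      proof (cases "mrca T1 u v = C")
        case True
        then show ?thesis using neg[OF u v uv] by blast
      next
        case False
        obtain w where w: "w \<in> C" "w \<noteq> u" "w \<noteq> v" "mrca T1 u w = C" "mrca T1 v w = C"
          using sep_witness[OF T1 C u v False] by blast
        have h1: "mrca T2 u w \<noteq> D" using neg[OF u w(1)] w(2,4) by metis
        have "mrca T1 w v = C" using w(5) mrca_sym[of T1 v w] by simp
        then have h2: "mrca T2 w v \<noteq> D" using neg[OF w(1) v] w(3) by metis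
        show ?thesis using trans2[OF T2 D(1) _ _ _ h1 h2] u v w(1) D(2) by blast
      qed
    qed
    let ?G = "(\<lambda>v. mrca T2 x0 v) ` (C - {x0})"
    have Gf: "finite ?G" using fC by simp
    have "card (C - {x0}) \<ge> 1" using cC x0 fC by (simp add: card_Diff_singleton)
    then have "C - {x0} \<noteq> {}" by (metis card.empty not_one_le_zero)
    then have Gne: "?G \<noteq> {}" by blast
    have GT: "\<And>E. E \<in> ?G \<Longrightarrow> E \<in> T2 \<and> x0 \<in> E \<and> E \<subseteq> D \<and> E \<noteq> D"
    proof -
      fix E assume "E \<in> ?G"
      then obtain v where v: "v \<in> C" "v \<noteq> x0" "E = mrca T2 x0 v" by blast
      have "x0 \<in> D" "v \<in> D" using x0 v D(2) by auto
      then have "E \<in> T2" "E \<subseteq> D" using mrca_pair_in[OF T2 _ _ D(1)] v(3) by auto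
      moreover have "x0 \<in> E" using v(3) mrca_mem by blast
      moreover have "E \<noteq> D" using bspec[OF bspec[OF all x0] v(1)] v(2) v(3) by auto
      ultimately show "E \<in> T2 \<and> x0 \<in> E \<and> E \<subseteq> D \<and> E \<noteq> D" by blast
    qed
    have chG: "\<forall>A\<in>?G. \<forall>B\<in>?G. A \<subseteq> B \<or> B \<subseteq> A"
    proof (intro ballI)
      fix A B assume "A \<in> ?G" "B \<in> ?G"
      then have "A \<in> T2" "x0 \<in> A" "B \<in> T2" "x0 \<in> B" using GT by auto
      then show "A \<subseteq> B \<or> B \<subseteq> A" using tree_nested[OF T2, of A B x0] by blast
    qed
    have UG: "\<Union>?G \<in> ?G" using chain_union[OF Gf Gne chG] .
    have "C \<subseteq> \<Union>?G"
    proof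
      fix v assume v: "v \<in> C"
      show "v \<in> \<Union>?G"
      proof (cases "v = x0")
        case True
        then show ?thesis using UG GT[OF UG] by blast
      next
        case False
        then have "mrca T2 x0 v \<in> ?G" using v by blast
        then show ?thesis using mrca_mem(2)[of v T2 x0] by blast
      qed
    qed
    moreover have "\<Union>?G \<in> T2" "\<Union>?G \<subseteq> D" "\<Union>?G \<noteq> D" using GT[OF UG] by auto
    ultimately have "D \<subseteq> \<Union>?G" using Dmin by blast
    then show False using \<open>\<Union>?G \<subseteq> D\<close> \<open>\<Union>?G \<noteq> D\<close> by blast
  qed
  then obtain u v where uv: "u \<in> C" "v \<in> C" "u \<noteq> v" "mrca T1 u v = C" "mrca T2 u v = D" by blast
  have "\<exists>c\<in>C. mrca T2 c z = D"
  proof (rule ccontr)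
    assume "\<not> ?thesis"
    then have h1: "mrca T2 u z \<noteq> D" and h2: "mrca T2 z v \<noteq> D"
      using uv mrca_sym[of T2 v z] by auto
    have "mrca T2 u v \<noteq> D" using trans2[OF T2 D(1) _ _ _ h1 h2] uv D(2) z(1) by blast
    then show False using uv(5) by blast
  qed
  then obtain c where c: "c \<in> C" "mrca T2 c z = D" by blast
  have cz: "c \<noteq> z" using c z by blast
  have in1: "u \<in> {1..n}" "v \<in> {1..n}" "c \<in> {1..n}" "z \<in> {1..n}" using uv c z Cs Ds by auto
  have "G1 C = G2 D" using pair_hyp[OF hyp in1(1) in1(2) uv(3)] uv by simp
  also have "\<dots> = G1 (mrca T1 c z)" using pair_hyp[OF hyp in1(3) in1(4) cz] c by simp
  finally have eq: "G1 C = G1 (mrca T1 c z)" .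
  have mT: "mrca T1 c z \<in> T1" using mrca_in[OF T1 in1(3) in1(4)] .
  have "C \<subseteq> mrca T1 c z \<or> mrca T1 c z \<subseteq> C"
    using tree_nested[OF T1 C mT, of c] c mrca_mem by blast
  moreover have "z \<in> mrca T1 c z" using mrca_mem by blast
  ultimately have "C \<subset> mrca T1 c z" using z(2) by blast
  then show ?thesis using eq mT by blast
qed

lemma const_lemma:
  assumes T1: "is_tree n T1" and T2: "is_tree n T2" and I: "T1 \<inter> T2 = {{1..n}}"
    and hyp: "\<forall>(u, v) \<in> pairs n. G1 (mrca T1 u v) = G2 (mrca T2 u v)"
  shows "\<forall>C\<in>T1. G1 C = G1 {1..n}"
proof -
  have "C \<in> T1 \<Longrightarrow> G1 C = G1 {1..n}" for C
  proof (induction C rule: measure_induct_rule[where f="\<lambda>C. n - card C"])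
    case (less C)
    show ?case
    proof (cases "C = {1..n}")
      case True
      then show ?thesis by simp
    next
      case False
      then have "C \<notin> T2" using I less.prems by blast
      then obtain C' where C': "C' \<in> T1" "C \<subset> C'" "G1 C = G1 C'"
        using step_lemma[OF T1 T2 hyp less.prems] by blast
      have "C' \<subseteq> {1..n}" using tree_sub[OF T1 C'(1)] .
      then have "card C' \<le> n" using card_mono[of "{1..n}" C'] by simp
      moreover have "card C < card C'" using psubset_card_mono[OF tree_cfinite[OF T1 C'(1)] C'(2)] .
      ultimately have "n - card C' < n - card C" by simp
      then have "G1 C' = G1 {1..n}" using less.IH C'(1) by blast
      then show ?thesis using C'(3) by simp
    qed
  qed
  then show ?thesis by blast
qed

definition ee :: "nat \<Rightarrow> nat set \<Rightarrow> nat \<times> nat \<Rightarrow> real" where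
  "ee n C = (\<lambda>p. if p \<in> pairs n \<and> fst p \<in> C \<and> snd p \<in> C then 1 else 0)"

lemma mobius:
  fixes b :: "'a set \<Rightarrow> real"
  assumes S: "finite S" and h: "\<forall>C\<in>S. (\<Sum>C'\<in>{C'\<in>S. C \<subseteq> C'}. b C') = 0"
  shows "\<forall>C\<in>S. b C = 0"
proof -
  have "C \<in> S \<Longrightarrow> b C = 0" for C
  proof (induction C rule: measure_induct_rule[where f="\<lambda>C. card {C'\<in>S. C \<subset> C'}"])
    case (less C)
    have IH: "\<forall>C'\<in>{C'\<in>S. C \<subset> C'}. b C' = 0"
    proof
      fix C' assume C': "C' \<in> {C'\<in>S. C \<subset> C'}"
      have sub: "{C''\<in>S. C' \<subset> C''} \<subset> {C''\<in>S. C \<subset> C''}"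
      proof
        show "{C''\<in>S. C' \<subset> C''} \<subseteq> {C''\<in>S. C \<subset> C''}" using C' by auto
        show "{C''\<in>S. C' \<subset> C''} \<noteq> {C''\<in>S. C \<subset> C''}" using C' by blast
      qed
      have "card {C''\<in>S. C' \<subset> C''} < card {C''\<in>S. C \<subset> C''}"
        using psubset_card_mono[OF _ sub] S by simp
      then show "b C' = 0" using less.IH C' by blast
    qed
    have eq: "{C'\<in>S. C \<subseteq> C'} = insert C {C'\<in>S. C \<subset> C'}" using less.prems by blast
    have "(\<Sum>C'\<in>{C'\<in>S. C \<subseteq> C'}. b C') = b C + (\<Sum>C'\<in>{C'\<in>S. C \<subset> C'}. b C')"
      unfolding eq using S by (subst sum.insert) auto
    also have "(\<Sum>C'\<in>{C'\<in>S. C \<subset> C'}. b C') = 0" using IH by simp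
    finally show "b C = 0" using h less.prems by simp
  qed
  then show ?thesis by blast
qed

lemma ee_tree:
  assumes T: "is_tree n T" and C: "C \<in> T" and p: "(u, v) \<in> pairs n"
  shows "ee n C (u, v) = (if mrca T u v \<subseteq> C then 1 else 0)"
proof -
  have "u \<in> C \<and> v \<in> C \<longleftrightarrow> mrca T u v \<subseteq> C"
    using mrca_le[OF C] mrca_mem[of u T v] mrca_mem[of v T u] by blast
  then show ?thesis unfolding ee_def using p by simp
qed

lemma ee_sum_tree:
  assumes T: "is_tree n T" and A: "A \<subseteq> T" and p: "(u, v) \<in> pairs n"
  shows "(\<Sum>C\<in>A. a C * ee n C (u, v)) = (\<Sum>C\<in>{C\<in>A. mrca T u v \<subseteq> C}. a C)"
proof -
  have fA: "finite A" using finite_subset[OF A tree_finite[OF T]] .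
  have "(\<Sum>C\<in>A. a C * ee n C (u, v)) = (\<Sum>C\<in>A. if mrca T u v \<subseteq> C then a C else 0)"
  proof (rule sum.cong)
    fix C assume "C \<in> A"
    then have "C \<in> T" using A by blast
    then show "a C * ee n C (u, v) = (if mrca T u v \<subseteq> C then a C else 0)"
      using ee_tree[OF T _ p] by simp
  qed simp
  also have "\<dots> = (\<Sum>C\<in>{C\<in>A. mrca T u v \<subseteq> C}. a C)"
    using sum.inter_filter[OF fA, symmetric] by simp
  finally show ?thesis .
qed

lemma core_indep:
  assumes T1: "is_tree n T1" and T2: "is_tree n T2" and I: "T1 \<inter> T2 = {{1..n}}"
    and h: "\<forall>p\<in>pairs n. (\<Sum>C\<in>T1 \<union> T2. a C * ee n C p) = 0"
  shows "\<forall>C\<in>T1 \<union> T2. a C = 0"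
proof -
  define G1 where "G1 E = (\<Sum>C\<in>{C\<in>T1. E \<subseteq> C}. a C)" for E
  define G2 where "G2 E = - (\<Sum>C\<in>{C\<in>T2 - T1. E \<subseteq> C}. a C)" for E
  have f1: "finite T1" using tree_finite[OF T1] .
  have f2: "finite (T2 - T1)" using tree_finite[OF T2] by simp
  have hyp: "\<forall>(u, v) \<in> pairs n. G1 (mrca T1 u v) = G2 (mrca T2 u v)"
  proof (intro ballI, clarify)
    fix u v assume p: "(u, v) \<in> pairs n"
    have U: "T1 \<union> T2 = T1 \<union> (T2 - T1)" by blast
    have "(\<Sum>C\<in>T1 \<union> T2. a C * ee n C (u, v)) =
        (\<Sum>C\<in>T1. a C * ee n C (u, v)) + (\<Sum>C\<in>T2 - T1. a C * ee n C (u, v))"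
      unfolding U by (rule sum.union_disjoint[OF f1 f2]) blast
    also have "(\<Sum>C\<in>T1. a C * ee n C (u, v)) = G1 (mrca T1 u v)"
      unfolding G1_def using ee_sum_tree[OF T1 order.refl p] .
    also have "(\<Sum>C\<in>T2 - T1. a C * ee n C (u, v)) = - G2 (mrca T2 u v)"
      unfolding G2_def using ee_sum_tree[OF T2 _ p, of "T2 - T1"] by auto
    finally have "G1 (mrca T1 u v) - G2 (mrca T2 u v) = 0" using h p by simp
    then show "G1 (mrca T1 u v) = G2 (mrca T2 u v)" by simp
  qed
  have hyp': "\<forall>(u, v) \<in> pairs n. G2 (mrca T2 u v) = G1 (mrca T1 u v)"
    using hyp by auto
  have I': "T2 \<inter> T1 = {{1..n}}" using I by blast
  have c1: "\<forall>C\<in>T1. G1 C = G1 {1..n}" using const_lemma[OF T1 T2 I hyp] .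
  have c2: "\<forall>C\<in>T2. G2 C = G2 {1..n}" using const_lemma[OF T2 T1 I' hyp'] .
  have e0: "{C\<in>T2 - T1. {1..n} \<subseteq> C} = {}"
  proof -
    have "\<And>C. C \<in> T2 \<Longrightarrow> {1..n} \<subseteq> C \<Longrightarrow> C \<in> T1"
    proof -
      fix C assume "C \<in> T2" "{1..n} \<subseteq> C"
      then have "C = {1..n}" using tree_sub[OF T2] by blast
      then show "C \<in> T1" using tree_root[OF T1] by simp
    qed
    then show ?thesis by blast
  qed
  have g2n: "G2 {1..n} = 0" unfolding G2_def e0 by simp
  obtain u v where uv: "(u, v) \<in> pairs n" "mrca T1 u v = {1..n}"
    using clade_is_mrca[OF T1 tree_root[OF T1]] by blast
  have uvn: "u \<in> {1..n}" "v \<in> {1..n}" using uv(1) unfolding pairs_def by auto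
  have "G1 {1..n} = G2 (mrca T2 u v)" using hyp uv by auto
  also have "\<dots> = 0" using c2 mrca_in[OF T2 uvn] g2n by simp
  finally have g1n: "G1 {1..n} = 0" .
  have z1: "\<forall>C\<in>T1. a C = 0"
  proof (rule mobius[OF f1])
    show "\<forall>C\<in>T1. (\<Sum>C'\<in>{C'\<in>T1. C \<subseteq> C'}. a C') = 0"
      using c1 g1n unfolding G1_def by simp
  qed
  have z2: "\<forall>C\<in>T2 - T1. a C = 0"
  proof (rule mobius[OF f2])
    show "\<forall>C\<in>T2 - T1. (\<Sum>C'\<in>{C'\<in>T2 - T1. C \<subseteq> C'}. a C') = 0"
    proof
      fix C assume "C \<in> T2 - T1"
      then have "G2 C = 0" using c2 g2n by simp
      then show "(\<Sum>C'\<in>{C'\<in>T2 - T1. C \<subseteq> C'}. a C') = 0" unfolding G2_def by simp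
    qed
  qed
  show ?thesis using z1 z2 by blast
qed

interpretation fv: vector_space "\<lambda>(r::real) (f::'a \<Rightarrow> real) p. r * f p"
  by unfold_locales (auto simp: fun_eq_iff algebra_simps)

lemma fun_sum_apply: "(\<Sum>x\<in>A. f x) p = (\<Sum>x\<in>A. (f x p :: real))"
  by (induction A rule: infinite_finite_induct) auto

definition hh :: "nat \<Rightarrow> nat set set \<Rightarrow> nat set \<Rightarrow> nat \<times> nat \<Rightarrow> real" where
  "hh n T C = (\<lambda>p. if p \<in> pairs n \<and> mrca T (fst p) (snd p) = C then 1 else 0)"

lemma pairs_mem: "(u, v) \<in> pairs n \<Longrightarrow> u \<in> {1..n} \<and> v \<in> {1..n}"
  unfolding pairs_def by auto

lemma ee_decomp:
  assumes T: "is_tree n T" and C: "C \<in> T"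
  shows "ee n C = hh n T C + (\<Sum>D\<in>{D\<in>T. D \<subset> C}. hh n T D)"
proof (rule ext)
  fix p :: "nat \<times> nat"
  obtain u v where p: "p = (u, v)" by (cases p)
  have fS: "finite {D\<in>T. D \<subset> C}" using tree_finite[OF T] by simp
  show "ee n C p = (hh n T C + (\<Sum>D\<in>{D\<in>T. D \<subset> C}. hh n T D)) p"
  proof (cases "p \<in> pairs n")
    case False
    then show ?thesis unfolding fun_sum_apply plus_fun_apply by (simp add: ee_def hh_def)
  next
    case True
    let ?m = "mrca T u v"
    have m: "?m \<in> T" using mrca_in[OF T] pairs_mem True p by blast
    have "(\<Sum>D\<in>{D\<in>T. D \<subset> C}. hh n T D p) = (\<Sum>D\<in>{D\<in>T. D \<subset> C}. if ?m = D then 1 else 0)"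
      using True p by (simp add: hh_def)
    also have "\<dots> = (if ?m \<in> {D\<in>T. D \<subset> C} then 1 else 0)"
      using sum.delta[OF fS, of ?m "\<lambda>_. 1::real"] by (simp add: eq_commute)
    finally have s: "(\<Sum>D\<in>{D\<in>T. D \<subset> C}. hh n T D p) = (if ?m \<subset> C then 1 else 0)"
      using m by simp
    have "ee n C p = (if ?m \<subseteq> C then 1 else 0)" using ee_tree[OF T C] True p by simp
    moreover have "hh n T C p = (if ?m = C then 1 else 0)" using True p by (simp add: hh_def)
    ultimately show ?thesis unfolding fun_sum_apply plus_fun_apply s by auto
  qed
qed

lemma hh_span:
  assumes T: "is_tree n T"
  shows "C \<in> T \<Longrightarrow> hh n T C \<in> fv.span (ee n ` T)"
proof (induction C rule: measure_induct_rule[where f=card])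
  case (less C)
  have IH: "\<And>D. D \<in> {D\<in>T. D \<subset> C} \<Longrightarrow> hh n T D \<in> fv.span (ee n ` T)"
  proof -
    fix D assume D: "D \<in> {D\<in>T. D \<subset> C}"
    then have "card D < card C" using psubset_card_mono[OF tree_cfinite[OF T less.prems]] by blast
    then show "hh n T D \<in> fv.span (ee n ` T)" using less.IH D by blast
  qed
  have eq: "hh n T C = ee n C - (\<Sum>D\<in>{D\<in>T. D \<subset> C}. hh n T D)"
    using ee_decomp[OF T less.prems] by simp
  have a: "ee n C \<in> fv.span (ee n ` T)" using less.prems by (intro fv.span_base) blast
  have b: "(\<Sum>D\<in>{D\<in>T. D \<subset> C}. hh n T D) \<in> fv.span (ee n ` T)"
    using IH by (intro fv.span_sum) blast
  have "ee n C - (\<Sum>D\<in>{D\<in>T. D \<subset> C}. hh n T D) \<in> fv.span (ee n ` T)"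
    using fv.span_diff[OF a b] .
  then show ?case by (subst eq)
qed

lemma K_span:
  assumes T: "is_tree n T" and x: "x \<in> K n T"
  shows "x \<in> fv.span (ee n ` T)"
proof -
  obtain w where z: "\<forall>p. p \<notin> pairs n \<longrightarrow> x p = 0"
      and w: "\<forall>(u, v) \<in> pairs n. x (u, v) = w (mrca T u v)"
    using x unfolding K_def by blast
  have fT: "finite T" using tree_finite[OF T] .
  have eq: "x = (\<Sum>C\<in>T. (\<lambda>p. w C * hh n T C p))"
  proof (rule ext)
    fix p :: "nat \<times> nat"
    obtain u v where p: "p = (u, v)" by (cases p)
    show "x p = (\<Sum>C\<in>T. (\<lambda>p. w C * hh n T C p)) p"
    proof (cases "p \<in> pairs n")
      case False
      have "x p = 0" using z False by blast
      then show ?thesis using False unfolding fun_sum_apply by (simp add: hh_def)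
    next
      case True
      let ?m = "mrca T u v"
      have m: "?m \<in> T" using mrca_in[OF T] pairs_mem True p by blast
      have "(\<Sum>C\<in>T. (\<lambda>p. w C * hh n T C p)) p = (\<Sum>C\<in>T. if ?m = C then w C else 0)"
        unfolding fun_sum_apply using True p by (intro sum.cong) (auto simp: hh_def)
      also have "\<dots> = w ?m" using sum.delta[OF fT, of ?m w] m by (simp add: eq_commute)
      finally show ?thesis using w True p by auto
    qed
  qed
  have "(\<Sum>C\<in>T. (\<lambda>p. w C * hh n T C p)) \<in> fv.span (ee n ` T)"
  proof (intro fv.span_sum)
    fix C assume "C \<in> T"
    then have "hh n T C \<in> fv.span (ee n ` T)" using hh_span[OF T] by blast
    then show "(\<lambda>p. w C * hh n T C p) \<in> fv.span (ee n ` T)" using fv.span_scale by blast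
  qed
  then show ?thesis using eq by simp
qed

lemma zero_K: "(\<lambda>p. 0) \<in> K n T"
  unfolding K_def by (intro CollectI conjI exI[of _ "\<lambda>_. 0"]) auto

lemma neg_ee_K:
  assumes T: "is_tree n T" and C: "C \<in> T"
  shows "(\<lambda>p. - ee n C p) \<in> K n T"
  unfolding K_def
proof (intro CollectI conjI exI[of _ "\<lambda>D. if D \<subseteq> C then -1 else 0"])
  show "\<forall>p. p \<notin> pairs n \<longrightarrow> - ee n C p = 0" by (simp add: ee_def)
  show "\<forall>C'\<in>T. \<forall>D\<in>T. C' \<subseteq> D \<longrightarrow>
      (if C' \<subseteq> C then -1 else 0) \<le> (if D \<subseteq> C then (-1::real) else 0)" by auto
  show "\<forall>(u, v)\<in>pairs n. - ee n C (u, v) = (if mrca T u v \<subseteq> C then -1 else 0)"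
  proof (intro ballI, clarify)
    fix u v assume p: "(u, v) \<in> pairs n"
    show "- ee n C (u, v) = (if mrca T u v \<subseteq> C then -1 else 0)"
      using ee_tree[OF T C p] by simp
  qed
qed

lemma mink_mem: "x \<in> A \<Longrightarrow> y \<in> B \<Longrightarrow> (\<lambda>p. x p + y p) \<in> minkowski_sum A B"
  unfolding minkowski_sum_def by blast

lemma span_mink:
  assumes T1: "is_tree n T1" and T2: "is_tree n T2"
  shows "fv.span (minkowski_sum (K n T1) (K n T2)) = fv.span (ee n ` (T1 \<union> T2))"
proof -
  have A: "minkowski_sum (K n T1) (K n T2) \<subseteq> fv.span (ee n ` (T1 \<union> T2))"
  proof
    fix z assume "z \<in> minkowski_sum (K n T1) (K n T2)"
    then obtain x y where xy: "z = (\<lambda>p. x p + y p)" "x \<in> K n T1" "y \<in> K n T2"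
      unfolding minkowski_sum_def by blast
    have "x \<in> fv.span (ee n ` (T1 \<union> T2))"
      using K_span[OF T1 xy(2)] fv.span_mono[of "ee n ` T1" "ee n ` (T1 \<union> T2)"] by blast
    moreover have "y \<in> fv.span (ee n ` (T1 \<union> T2))"
      using K_span[OF T2 xy(3)] fv.span_mono[of "ee n ` T2" "ee n ` (T1 \<union> T2)"] by blast
    ultimately have "x + y \<in> fv.span (ee n ` (T1 \<union> T2))" by (rule fv.span_add)
    moreover have "x + y = z" using xy(1) by (simp add: fun_eq_iff)
    ultimately show "z \<in> fv.span (ee n ` (T1 \<union> T2))" by simp
  qed
  have B: "ee n ` (T1 \<union> T2) \<subseteq> fv.span (minkowski_sum (K n T1) (K n T2))"
  proof
    fix e assume "e \<in> ee n ` (T1 \<union> T2)"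
    then obtain C where C: "C \<in> T1 \<union> T2" "e = ee n C" by blast
    have "(\<lambda>p. - ee n C p) \<in> minkowski_sum (K n T1) (K n T2)"
    proof (cases "C \<in> T1")
      case True
      have "(\<lambda>p. (\<lambda>p. - ee n C p) p + (\<lambda>p. 0) p) \<in> minkowski_sum (K n T1) (K n T2)"
        using mink_mem[OF neg_ee_K[OF T1 True] zero_K] .
      then show ?thesis by simp
    next
      case False
      then have C2: "C \<in> T2" using C by blast
      have "(\<lambda>p. (\<lambda>p. 0) p + (\<lambda>p. - ee n C p) p) \<in> minkowski_sum (K n T1) (K n T2)"
        using mink_mem[OF zero_K neg_ee_K[OF T2 C2]] .
      then show ?thesis by simp
    qed
    then have "(\<lambda>p. (-1) * (\<lambda>p. - ee n C p) p) \<in> fv.span (minkowski_sum (K n T1) (K n T2))"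
      using fv.span_scale[OF fv.span_base] by blast
    then show "e \<in> fv.span (minkowski_sum (K n T1) (K n T2))" using C(2) by simp
  qed
  show ?thesis using fv.span_eq A B by blast
qed

lemma dim_mink:
  assumes T1: "is_tree n T1" and T2: "is_tree n T2"
  shows "cone_dim (minkowski_sum (K n T1) (K n T2)) = fv.dim (ee n ` (T1 \<union> T2))"
proof -
  have "cone_dim (minkowski_sum (K n T1) (K n T2)) = fv.dim (minkowski_sum (K n T1) (K n T2))"
    unfolding cone_dim_def ..
  also have "\<dots> = fv.dim (fv.span (minkowski_sum (K n T1) (K n T2)))" by simp
  also have "\<dots> = fv.dim (fv.span (ee n ` (T1 \<union> T2)))" using span_mink[OF T1 T2] by simp
  also have "\<dots> = fv.dim (ee n ` (T1 \<union> T2))" by simp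
  finally show ?thesis .
qed

lemma ee_sub:
  assumes Cs: "C \<subseteq> {1..n}" and cC: "2 \<le> card C" and e: "ee n C = ee n D"
  shows "C \<subseteq> D"
proof
  fix x assume x: "x \<in> C"
  have fC: "finite C" using finite_subset[OF Cs] by simp
  have "card (C - {x}) \<ge> 1" using cC x fC by (simp add: card_Diff_singleton)
  then have "C - {x} \<noteq> {}" by (metis card.empty not_one_le_zero)
  then obtain y where y: "y \<in> C" "y \<noteq> x" by blast
  let ?q = "(min x y, max x y)"
  have xy: "x \<in> {1..n}" "y \<in> {1..n}" using x y Cs by auto
  have q: "?q \<in> pairs n" using xy y(2) unfolding pairs_def by auto
  have "min x y \<in> C" "max x y \<in> C" using x y(1) by (auto simp: min_def max_def)
  then have "ee n C ?q = 1" using q unfolding ee_def by simp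
  then have "ee n D ?q = 1" using e by simp
  then have "min x y \<in> D" "max x y \<in> D" unfolding ee_def by (auto split: if_splits)
  then show "x \<in> D" by (cases "x \<le> y") (auto simp: min_def max_def)
qed

lemma ee_inj:
  assumes "\<forall>C\<in>U. C \<subseteq> {1..n} \<and> 2 \<le> card C"
  shows "inj_on (ee n) U"
proof (rule inj_onI)
  fix C D assume C: "C \<in> U" and D: "D \<in> U" and e: "ee n C = ee n D"
  have c: "C \<subseteq> {1..n}" "2 \<le> card C" using assms C by auto
  have d: "D \<subseteq> {1..n}" "2 \<le> card D" using assms D by auto
  have "C \<subseteq> D" using ee_sub[OF c e] .
  moreover have "D \<subseteq> C" using ee_sub[OF d e[symmetric]] .
  ultimately show "C = D" by blast
qed

lemma trees_inj:
  assumes T1: "is_tree n T1" and T2: "is_tree n T2"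
  shows "inj_on (ee n) (T1 \<union> T2)"
proof (rule ee_inj, rule ballI)
  fix C assume "C \<in> T1 \<union> T2"
  then show "C \<subseteq> {1..n} \<and> 2 \<le> card C"
  proof
    assume "C \<in> T1" then show ?thesis using tree_sub[OF T1] tree_card[OF T1] by simp
  next
    assume "C \<in> T2" then show ?thesis using tree_sub[OF T2] tree_card[OF T2] by simp
  qed
qed

lemma indep:
  assumes T1: "is_tree n T1" and T2: "is_tree n T2" and I: "T1 \<inter> T2 = {{1..n}}"
  shows "fv.dim (ee n ` (T1 \<union> T2)) = card (T1 \<union> T2)"
proof -
  let ?U = "T1 \<union> T2"
  have fU: "finite ?U" using tree_finite[OF T1] tree_finite[OF T2] by simp
  have inj: "inj_on (ee n) ?U" using trees_inj[OF T1 T2] .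
  have "\<not> fv.dependent (ee n ` ?U)"
  proof
    assume "fv.dependent (ee n ` ?U)"
    then obtain u where u: "\<exists>v\<in>ee n ` ?U. u v \<noteq> 0"
        and s: "(\<Sum>v\<in>ee n ` ?U. (\<lambda>p. u v * v p)) = 0"
      using fv.dependent_finite[of "ee n ` ?U"] fU by auto
    have s2: "(\<Sum>C\<in>?U. (\<lambda>p. u (ee n C) * ee n C p)) = 0"
      using s sum.reindex[OF inj, of "\<lambda>v. (\<lambda>p. u v * v p)"] by (simp add: comp_def)
    have h: "\<forall>p\<in>pairs n. (\<Sum>C\<in>?U. u (ee n C) * ee n C p) = 0"
    proof
      fix p assume "p \<in> pairs n"
      have "(\<Sum>C\<in>?U. (\<lambda>p. u (ee n C) * ee n C p)) p = 0" using s2 by simp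
      then show "(\<Sum>C\<in>?U. u (ee n C) * ee n C p) = 0" unfolding fun_sum_apply .
    qed
    have "\<forall>C\<in>?U. u (ee n C) = 0" using core_indep[OF T1 T2 I h] .
    then show False using u by blast
  qed
  then have "fv.dim (ee n ` ?U) = card (ee n ` ?U)" by (rule fv.dim_eq_card_independent)
  also have "\<dots> = card ?U" using card_image[OF inj] .
  finally show ?thesis .
qed

lemma dim_le:
  assumes T1: "is_tree n T1" and T2: "is_tree n T2"
  shows "fv.dim (ee n ` (T1 \<union> T2)) \<le> card (T1 \<union> T2)"
proof -
  have fU: "finite (T1 \<union> T2)" using tree_finite[OF T1] tree_finite[OF T2] by simp
  have "fv.dim (ee n ` (T1 \<union> T2)) \<le> card (ee n ` (T1 \<union> T2))"
    by (rule fv.dim_le_card[OF fv.span_superset finite_imageI[OF fU]])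
  also have "\<dots> \<le> card (T1 \<union> T2)" using card_image_le[OF fU] .
  finally show ?thesis .
qed

lemma card_union_trees:
  assumes T1: "is_tree n T1" and T2: "is_tree n T2"
  shows "card (T1 \<union> T2) + card (T1 \<inter> T2) = card T1 + card T2" "1 \<le> card (T1 \<inter> T2)"
proof -
  show "card (T1 \<union> T2) + card (T1 \<inter> T2) = card T1 + card T2"
    using card_Un_Int[OF tree_finite[OF T1] tree_finite[OF T2]] by simp
  have "{1..n} \<in> T1 \<inter> T2" using tree_root[OF T1] tree_root[OF T2] by blast
  moreover have "finite (T1 \<inter> T2)" using tree_finite[OF T1] by simp
  ultimately show "1 \<le> card (T1 \<inter> T2)"
    by (metis One_nat_def Suc_leI card_gt_0_iff empty_iff)
qed

lemma dim_bound:
  assumes n: "2 \<le> n" and T1: "is_tree n T1" and T2: "is_tree n T2"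
  shows "cone_dim (minkowski_sum (K n T1) (K n T2)) \<le> 2 * n - 3"
proof -
  have "cone_dim (minkowski_sum (K n T1) (K n T2)) \<le> card (T1 \<union> T2)"
    using dim_mink[OF T1 T2] dim_le[OF T1 T2] by simp
  moreover have "card T1 \<le> n - 1" "card T2 \<le> n - 1"
    using tree_card_bound(1)[OF T1] tree_card_bound(1)[OF T2] n by auto
  ultimately show ?thesis using card_union_trees[OF T1 T2] n by linarith
qed

definition cat1 :: "nat \<Rightarrow> nat set set" where
  "cat1 n = (\<lambda>k. {1..k}) ` {2..n}"

definition cat2 :: "nat \<Rightarrow> nat set set" where
  "cat2 n = (\<lambda>k. {k..n}) ` {1..n-1}"

lemma cat1_tree: assumes n: "2 \<le> n" shows "is_tree n (cat1 n)"
proof -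
  have a: "{1..n} \<in> cat1 n" using n unfolding cat1_def by auto
  have b: "\<forall>C\<in>cat1 n. C \<subseteq> {1..n} \<and> 2 \<le> card C"
  proof
    fix C assume "C \<in> cat1 n"
    then obtain k where "C = {1..k}" "2 \<le> k" "k \<le> n" unfolding cat1_def by auto
    then show "C \<subseteq> {1..n} \<and> 2 \<le> card C" by auto
  qed
  have c: "\<forall>C\<in>cat1 n. \<forall>D\<in>cat1 n. C \<subseteq> D \<or> D \<subseteq> C \<or> C \<inter> D = {}"
  proof (intro ballI)
    fix C D assume "C \<in> cat1 n" "D \<in> cat1 n"
    then obtain k l where "C = {1..k}" "D = {1..l}" unfolding cat1_def by auto
    then show "C \<subseteq> D \<or> D \<subseteq> C \<or> C \<inter> D = {}" by (cases "k \<le> l") auto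
  qed
  show ?thesis unfolding is_tree_def using a b c by blast
qed

lemma cat2_tree: assumes n: "2 \<le> n" shows "is_tree n (cat2 n)"
proof -
  have a: "{1..n} \<in> cat2 n" using n unfolding cat2_def by auto
  have b: "\<forall>C\<in>cat2 n. C \<subseteq> {1..n} \<and> 2 \<le> card C"
  proof
    fix C assume "C \<in> cat2 n"
    then obtain k where "C = {k..n}" "k \<in> {1..n-1}" unfolding cat2_def by (rule imageE)
    then show "C \<subseteq> {1..n} \<and> 2 \<le> card C" by auto
  qed
  have c: "\<forall>C\<in>cat2 n. \<forall>D\<in>cat2 n. C \<subseteq> D \<or> D \<subseteq> C \<or> C \<inter> D = {}"
  proof (intro ballI)
    fix C D assume "C \<in> cat2 n" "D \<in> cat2 n"
    then obtain k l where "C = {k..n}" "D = {l..n}" unfolding cat2_def by (auto elim!: imageE)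
    then show "C \<subseteq> D \<or> D \<subseteq> C \<or> C \<inter> D = {}" by (cases "k \<le> l") auto
  qed
  show ?thesis unfolding is_tree_def using a b c by blast
qed

lemma cat1_card: assumes n: "2 \<le> n" shows "card (cat1 n) = n - 1"
proof -
  have "inj_on (\<lambda>k. {1..k::nat}) {2..n}"
  proof (rule inj_onI)
    fix k l :: nat assume "k \<in> {2..n}" "l \<in> {2..n}" "{1..k} = {1..l}"
    then show "k = l" by (metis atLeastAtMost_iff nat_le_linear order_antisym le_trans one_le_numeral)
  qed
  then show ?thesis unfolding cat1_def using card_image by fastforce
qed

lemma cat2_card: assumes n: "2 \<le> n" shows "card (cat2 n) = n - 1"
proof -
  have "inj_on (\<lambda>k. {k..n::nat}) {1..n-1}"
  proof (rule inj_onI)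
    fix k l :: nat assume "k \<in> {1..n-1}" "l \<in> {1..n-1}" "{k..n} = {l..n}"
    then show "k = l" by (metis atLeastAtMost_iff diff_le_self le_trans nat_le_linear order_antisym)
  qed
  then show ?thesis unfolding cat2_def using card_image by fastforce
qed

lemma cat_inter: assumes n: "2 \<le> n" shows "cat1 n \<inter> cat2 n = {{1..n}}"
proof
  show "{{1..n}} \<subseteq> cat1 n \<inter> cat2 n" using n unfolding cat1_def cat2_def by auto
  show "cat1 n \<inter> cat2 n \<subseteq> {{1..n}}"
  proof
    fix X assume "X \<in> cat1 n \<inter> cat2 n"
    then have "X \<in> cat1 n" "X \<in> cat2 n" by auto
    then obtain k j where X0: "X = {1..k}" "k \<in> {2..n}" "X = {j..n}" "j \<in> {1..n-1}"
      unfolding cat1_def cat2_def by (auto elim!: imageE)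
    then have X: "X = {1..k}" "2 \<le> k" "X = {j..n}" "1 \<le> j" "j \<le> n - 1" by auto
    then have "1 \<in> {j..n}" by auto
    then have "j = 1" using X(4) by auto
    then show "X \<in> {{1..n}}" using X(3) by simp
  qed
qed

lemma max_dim:
  assumes n: "2 \<le> n"
  shows "max_pair_dim n = 2 * n - 3"
proof -
  let ?S = "{cone_dim (minkowski_sum (K n H1) (K n H2)) | H1 H2. is_tree n H1 \<and> is_tree n H2}"
  have le: "\<And>y. y \<in> ?S \<Longrightarrow> y \<le> 2 * n - 3" using dim_bound[OF n] by blast
  have sub: "?S \<subseteq> {..2*n-3}"
  proof
    fix y assume "y \<in> ?S"
    then show "y \<in> {..2*n-3}" using le[of y] by simp
  qed
  have fin: "finite ?S" using finite_subset[OF sub] by simp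
  have T1: "is_tree n (cat1 n)" and T2: "is_tree n (cat2 n)" using cat1_tree[OF n] cat2_tree[OF n] .
  have "cone_dim (minkowski_sum (K n (cat1 n)) (K n (cat2 n))) = card (cat1 n \<union> cat2 n)"
    using dim_mink[OF T1 T2] indep[OF T1 T2 cat_inter[OF n]] by simp
  also have "\<dots> = 2 * n - 3"
    using card_union_trees(1)[OF T1 T2] cat_inter[OF n] cat1_card[OF n] cat2_card[OF n] n by simp
  finally have "2 * n - 3 \<in> ?S" using T1 T2 by (metis (mono_tags, lifting) mem_Collect_eq)
  then show ?thesis unfolding max_pair_dim_def using Max_eqI[OF fin le] by blast
qed

theorem corollary3p8:
  fixes n :: nat and T1 T2 :: "nat set set"
  assumes "n \<ge> 2" and "is_tree n T1" and "is_tree n T2"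
  shows "cone_dim (minkowski_sum (K n T1) (K n T2)) = max_pair_dim n \<longleftrightarrow>
           is_binary n T1 \<and> is_binary n T2 \<and> T1 \<inter> T2 = {{1..n}}"
proof -
  note n = assms(1) and T1 = assms(2) and T2 = assms(3)
  have n1: "1 \<le> n" using n by simp
  have md: "max_pair_dim n = 2 * n - 3" using max_dim[OF n] .
  have dm: "cone_dim (minkowski_sum (K n T1) (K n T2)) = fv.dim (ee n ` (T1 \<union> T2))"
    using dim_mink[OF T1 T2] .
  have le: "fv.dim (ee n ` (T1 \<union> T2)) \<le> card (T1 \<union> T2)" using dim_le[OF T1 T2] .
  have cu: "card (T1 \<union> T2) + card (T1 \<inter> T2) = card T1 + card T2" "1 \<le> card (T1 \<inter> T2)"
    using card_union_trees[OF T1 T2] by auto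
  have b1: "card T1 \<le> n - 1" "is_binary n T1 \<longleftrightarrow> card T1 = n - 1" using tree_card_bound[OF T1 n1] by auto
  have b2: "card T2 \<le> n - 1" "is_binary n T2 \<longleftrightarrow> card T2 = n - 1" using tree_card_bound[OF T2 n1] by auto
  show ?thesis
  proof
    assume "cone_dim (minkowski_sum (K n T1) (K n T2)) = max_pair_dim n"
    then have d: "fv.dim (ee n ` (T1 \<union> T2)) = 2 * n - 3" using dm md by simp
    then have c: "card (T1 \<union> T2) \<ge> 2 * n - 3" using le by simp
    have "card T1 = n - 1" "card T2 = n - 1" "card (T1 \<inter> T2) = 1"
      using c cu b1(1) b2(1) n by linarith+
    moreover have "{1..n} \<in> T1 \<inter> T2" using tree_root[OF T1] tree_root[OF T2] by blast
    moreover have "finite (T1 \<inter> T2)" using tree_finite[OF T1] by simp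
    ultimately have "T1 \<inter> T2 = {{1..n}}"
      by (metis card_1_singletonE singletonD)
    then show "is_binary n T1 \<and> is_binary n T2 \<and> T1 \<inter> T2 = {{1..n}}"
      using b1 b2 \<open>card T1 = n - 1\<close> \<open>card T2 = n - 1\<close> by blast
  next
    assume h: "is_binary n T1 \<and> is_binary n T2 \<and> T1 \<inter> T2 = {{1..n}}"
    then have "card T1 = n - 1" "card T2 = n - 1" using b1 b2 by auto
    moreover have "card (T1 \<inter> T2) = 1" using h by simp
    moreover have "fv.dim (ee n ` (T1 \<union> T2)) = card (T1 \<union> T2)" using indep[OF T1 T2] h by blast
    ultimately show "cone_dim (minkowski_sum (K n T1) (K n T2)) = max_pair_dim n"
      using dm md cu n by simp
  qed
qed

end
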